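(* Let $\mathcal H$ be a real Hilbert space, $T:\mathcal H\rightrightarrows\mathcal H$ maximal monotone, $a,b\ge0$, $\psi(\rho,z):=a\rho^2+b\rho+\big(\rho\|J_{\rho T}(z)-z\|\big)^2$ for $\rho>0$, and let $z\in\mathcal H$ with $0\notin T(z)$. Then: (a) $\psi(\rho,z)>0$ for every $\rho>0$; (b) $\rho\mapsto\psi(\rho,z)$ is strictly increasing and continuous on $(0,\infty)$, with $\psi(\rho,z)\to0$ as $\rho\to0^+$ and $\psi(\rho,z)\to\infty$ as $\rho\to\infty$; (c) for any $0<\theta_-<\theta_+<\infty$, the set of $\rho>0$ with $\theta_-\le\psi(\rho,z)\le\theta_+$ is a closed interval $[\rho_-,\rho_+]$ where $\psi(\rho_-,z)=\theta_-$ and $\psi(\rho_+,z)=\theta_+$, and $\rho_+/\rho_-\ge(\theta_+/\theta_-)^{1/4}$.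
   Context: $J_{\rho T}:=(\rho T+I)^{-1}$ denotes the resolvent of $\rho T$. *)

theory Defs
  imports "HOL-Analysis.Analysis"
begin

definition monotone_op :: "('a::real_inner \<Rightarrow> 'a set) \<Rightarrow> bool" where
  "monotone_op T \<longleftrightarrow>
     (\<forall>x y u v. u \<in> T x \<longrightarrow> v \<in> T y \<longrightarrow> inner (x - y) (u - v) \<ge> 0)"

definition maximal_monotone :: "('a::real_inner \<Rightarrow> 'a set) \<Rightarrow> bool" where
  "maximal_monotone T \<longleftrightarrow> monotone_op T \<and>
     (\<forall>x u. (\<forall>y v. v \<in> T y \<longrightarrow> inner (x - y) (u - v) \<ge> 0) \<longrightarrow> u \<in> T x)"

text \<open>Resolvent J_{\<rho>T} = (\<rho>T + I)^{-1}: J_{\<rho>T}(z) is the (unique, by Minty) x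
  with z \<in> x + \<rho> T x.\<close>
definition resolvent :: "real \<Rightarrow> ('a::real_inner \<Rightarrow> 'a set) \<Rightarrow> 'a \<Rightarrow> 'a" where
  "resolvent \<rho> T z = (THE x. \<exists>u \<in> T x. z = x + \<rho> *\<^sub>R u)"

definition psi :: "real \<Rightarrow> real \<Rightarrow> ('a::real_inner \<Rightarrow> 'a set) \<Rightarrow> real \<Rightarrow> 'a \<Rightarrow> real" where
  "psi a b T \<rho> z = a * \<rho>\<^sup>2 + b * \<rho> + (\<rho> * norm (resolvent \<rho> T z - z))\<^sup>2"

end

theory Submission
  imports Defs
begin


lemma parallel_bound:
  fixes x y :: "'b::real_inner"
  assumes "convex K" "x \<in> K" "y \<in> K" "(norm x)\<^sup>2 \<le> A" "(norm y)\<^sup>2 \<le> A"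
    "\<And>z. z \<in> K \<Longrightarrow> B \<le> (norm z)\<^sup>2"
  shows "(norm (x - y))\<^sup>2 \<le> 4 * (A - B)"
proof -
  have "(1/2) *\<^sub>R x + (1/2) *\<^sub>R y \<in> K"
    using assms(1-3) unfolding convex_def by (metis add_divide_distrib divide_self_if zero_le_divide_1_iff zero_le_numeral one_add_one zero_neq_numeral)
  then have "B \<le> (norm ((1/2) *\<^sub>R x + (1/2) *\<^sub>R y))\<^sup>2" using assms(6) by blast
  moreover have "4 * (norm ((1/2) *\<^sub>R x + (1/2) *\<^sub>R y))\<^sup>2 = (inner x x + 2 * inner x y + inner y y)"
    by (simp add: power2_norm_eq_inner inner_add_left inner_add_right inner_commute algebra_simps)
  moreover have "(norm (x - y))\<^sup>2 = inner x x - 2 * inner x y + inner y y"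
    by (simp add: power2_norm_eq_inner inner_diff_left inner_diff_right inner_commute algebra_simps)
  moreover have "(norm x)\<^sup>2 = inner x x" "(norm y)\<^sup>2 = inner y y" by (simp_all add: power2_norm_eq_inner)
  ultimately show ?thesis using assms(4,5) by (simp only: algebra_simps)
qed


lemma fip_hilbert:
  fixes \<F> :: "'b::{real_inner,complete_space} set set"
  assumes clo: "\<And>B. B \<in> \<F> \<Longrightarrow> closed B" and cvx: "\<And>B. B \<in> \<F> \<Longrightarrow> convex B"
    and bnd: "\<And>B. B \<in> \<F> \<Longrightarrow> bounded B"
    and fin: "\<And>F. finite F \<Longrightarrow> F \<subseteq> \<F> \<Longrightarrow> \<Inter>F \<noteq> {}"
  shows "\<Inter>\<F> \<noteq> {}"
proof (cases "\<F> = {}")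
  case True then show ?thesis by simp
next
  case False
  then obtain B0 where B0: "B0 \<in> \<F>" by blast
  then obtain R where R: "\<And>x. x \<in> B0 \<Longrightarrow> norm x \<le> R" using bnd bounded_iff by metis
  define \<mu> where "\<mu> F = Inf ((\<lambda>w. (norm w)\<^sup>2) ` \<Inter>F)" for F :: "'b set set"
  define Fin where "Fin = {F. finite F \<and> F \<subseteq> \<F>}"
  have bb: "bdd_below ((\<lambda>w. (norm w)\<^sup>2) ` \<Inter>F)" for F
    by (rule bdd_belowI[of _ 0]) auto
  have mu_le: "\<mu> F \<le> (norm w)\<^sup>2" if "w \<in> \<Inter>F" for F w
    unfolding \<mu>_def using that bb by (intro cInf_lower) auto
  have mu_ex: "\<exists>w\<in>\<Inter>F. (norm w)\<^sup>2 < \<mu> F + e" if "F \<in> Fin" "e > 0" for F e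
  proof -
    have ne: "\<Inter>F \<noteq> {}" using fin that unfolding Fin_def by blast
    have "\<mu> F < \<mu> F + e" using that by simp
    then have "Inf ((\<lambda>w. (norm w)\<^sup>2) ` \<Inter>F) < \<mu> F + e" unfolding \<mu>_def .
    then have "\<exists>t\<in>(\<lambda>w. (norm w)\<^sup>2) ` \<Inter>F. t < \<mu> F + e"
      using cInf_less_iff[of "(\<lambda>w. (norm w)\<^sup>2) ` \<Inter>F"] ne bb[of F] by (metis image_is_empty)
    then show ?thesis by blast
  qed
  have mu_mono: "\<mu> F \<le> \<mu> F'" if "F \<subseteq> F'" "F' \<in> Fin" for F F'
  proof -
    have ne: "\<Inter>F' \<noteq> {}" using fin that unfolding Fin_def by blast
    show ?thesis unfolding \<mu>_def[of F']
      using ne that by (intro cInf_greatest) (auto intro!: mu_le)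
  qed
  have mu_R: "\<mu> F \<le> R\<^sup>2" if "F \<in> Fin" for F
  proof -
    have "insert B0 F \<in> Fin" using that B0 unfolding Fin_def by auto
    then obtain w where w: "w \<in> \<Inter>(insert B0 F)" using fin unfolding Fin_def by blast
    have "\<mu> F \<le> \<mu> (insert B0 F)" using mu_mono \<open>insert B0 F \<in> Fin\<close> by blast
    also have "\<dots> \<le> (norm w)\<^sup>2" using mu_le w by blast
    also have "\<dots> \<le> R\<^sup>2" using R[of w] w by (simp add: power_mono)
    finally show ?thesis .
  qed
  define M where "M = Sup (\<mu> ` Fin)"
  have Finne: "{} \<in> Fin" unfolding Fin_def by simp
  have ba: "bdd_above (\<mu> ` Fin)" using mu_R by (intro bdd_aboveI[of _ "R\<^sup>2"]) auto
  have mu_M: "\<mu> F \<le> M" if "F \<in> Fin" for F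
    unfolding M_def using that ba by (intro cSup_upper) auto
  have M_ex: "\<exists>F\<in>Fin. M - e < \<mu> F" if "e > 0" for e
  proof -
    have "M - e < M" using that by simp
    moreover have "Fin \<noteq> {}" using Finne by blast
    ultimately show ?thesis unfolding M_def using ba less_cSup_iff[of "\<mu> ` Fin" "M - e"] unfolding M_def by auto
  qed
  define e where "e n = 1 / (real n + 1)" for n :: nat
  have epos: "e n > 0" for n unfolding e_def by simp
  have emono: "e m \<le> e n" if "n \<le> m" for m n
    unfolding e_def using that by (simp add: frac_le)
  have "\<forall>n. \<exists>G. G \<in> Fin \<and> M - e n < \<mu> G" using M_ex epos by blast
  then obtain G where G: "\<And>n. G n \<in> Fin" "\<And>n. M - e n < \<mu> (G n)" by metis
  define F where "F n = \<Union> (G ` {..n})" for n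
  have FFin: "F n \<in> Fin" for n using G(1) unfolding F_def Fin_def by auto
  have Fmono: "F n \<subseteq> F m" if "n \<le> m" for n m unfolding F_def using that by (auto intro: order_trans)
  have Flow: "M - e n < \<mu> (F n)" for n
  proof -
    have "G n \<subseteq> F n" unfolding F_def by auto
    then show ?thesis using G(2)[of n] mu_mono FFin by (meson less_le_trans)
  qed
  have cvxI: "convex (\<Inter>F)" if "F \<in> Fin" for F using cvx that unfolding Fin_def by (intro convex_Inter) auto
  have key: "(norm (x - y))\<^sup>2 \<le> 8 * e n" if "x \<in> \<Inter>(F n)" "y \<in> \<Inter>(F n)"
    "(norm x)\<^sup>2 \<le> M + e n" "(norm y)\<^sup>2 \<le> M + e n" for x y n
  proof -
    have "(norm (x - y))\<^sup>2 \<le> 4 * ((M + e n) - (M - e n))"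
      using that cvxI[OF FFin] mu_le Flow
      by (intro parallel_bound[of "\<Inter>(F n)"]) (auto, metis Inter_iff less_imp_le order_trans)
    then show ?thesis by simp
  qed
  have "\<forall>n. \<exists>w. w \<in> \<Inter>(F n) \<and> (norm w)\<^sup>2 < \<mu> (F n) + e n" using mu_ex FFin epos by blast
  then obtain w where w: "\<And>n. w n \<in> \<Inter>(F n)" "\<And>n. (norm (w n))\<^sup>2 < \<mu> (F n) + e n" by metis
  have wM: "(norm (w n))\<^sup>2 \<le> M + e n" for n using w(2)[of n] mu_M[OF FFin] by smt
  define g where "g n = sqrt (8 * e n)" for n
  have g0: "g \<longlonglongrightarrow> 0"
  proof -
    have "e = (\<lambda>n. inverse (real (Suc n)))" unfolding e_def by (auto simp: field_simps)
    then have "e \<longlonglongrightarrow> 0" using LIMSEQ_inverse_real_of_nat by simp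
    then have "(\<lambda>n. 8 * e n) \<longlonglongrightarrow> 8 * 0" by (intro tendsto_mult) auto
    then show ?thesis unfolding g_def using tendsto_real_sqrt by fastforce
  qed
  have wclose: "dist (w n) (w m) \<le> g n" if "n \<le> m" for n m
  proof -
    have "w m \<in> \<Inter>(F n)" using w(1)[of m] Fmono[OF that] by blast
    moreover have "(norm (w m))\<^sup>2 \<le> M + e n" using wM[of m] emono[OF that] by linarith
    ultimately have "(norm (w n - w m))\<^sup>2 \<le> 8 * e n" using key w(1) wM by blast
    then show ?thesis unfolding g_def dist_norm by (simp add: real_le_rsqrt)
  qed
  have "Cauchy w"
  proof (rule metric_CauchyI)
    fix \<epsilon> :: real assume "\<epsilon> > 0"
    then have "\<epsilon>/2 > 0" by simp
    from order_tendstoD(2)[OF g0 this] obtain N where N: "g N < \<epsilon>/2"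
      by (auto simp: eventually_sequentially)
    show "\<exists>N. \<forall>m\<ge>N. \<forall>n\<ge>N. dist (w m) (w n) < \<epsilon>"
    proof (intro exI allI impI)
      fix m n assume "N \<le> m" "N \<le> n"
      then have "dist (w m) (w n) \<le> dist (w N) (w m) + dist (w N) (w n)" by (simp add: dist_triangle3 dist_commute)
      also have "\<dots> \<le> g N + g N" using wclose \<open>N \<le> m\<close> \<open>N \<le> n\<close> by (intro add_mono) auto
      finally show "dist (w m) (w n) < \<epsilon>" using N by linarith
    qed
  qed
  then obtain ws where ws: "w \<longlonglongrightarrow> ws" using complete_UNIV convergent_def by (metis Cauchy_convergent_iff)
  have "ws \<in> B" if B: "B \<in> \<F>" for B
  proof -
    have "\<forall>n. \<exists>v. v \<in> \<Inter>(insert B (F n)) \<and> (norm v)\<^sup>2 < \<mu> (insert B (F n)) + e n"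
    proof
      fix n
      have "insert B (F n) \<in> Fin" using FFin[of n] B unfolding Fin_def by auto
      then show "\<exists>v. v \<in> \<Inter>(insert B (F n)) \<and> (norm v)\<^sup>2 < \<mu> (insert B (F n)) + e n"
        using mu_ex epos by blast
    qed
    then obtain v where v: "\<And>n. v n \<in> \<Inter>(insert B (F n))" "\<And>n. (norm (v n))\<^sup>2 < \<mu> (insert B (F n)) + e n" by metis
    have vM: "(norm (v n))\<^sup>2 \<le> M + e n" for n
    proof -
      have "insert B (F n) \<in> Fin" using FFin[of n] B unfolding Fin_def by auto
      then show ?thesis using v(2)[of n] mu_M by smt
    qed
    have "norm (v n - w n) \<le> g n" for n
    proof -
      have "v n \<in> \<Inter>(F n)" using v(1)[of n] by auto
      then have "(norm (v n - w n))\<^sup>2 \<le> 8 * e n" using key w(1) wM vM by blast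
      then show ?thesis unfolding g_def by (simp add: real_le_rsqrt)
    qed
    then have "eventually (\<lambda>n. norm (v n - w n) \<le> g n) sequentially" by (simp add: always_eventually)
    then have "(\<lambda>n. v n - w n) \<longlonglongrightarrow> 0" using g0 by (rule Lim_null_comparison)
    then have "(\<lambda>n. (v n - w n) + w n) \<longlonglongrightarrow> 0 + ws" using ws by (intro tendsto_add)
    then have "v \<longlonglongrightarrow> ws" by simp
    moreover have "v n \<in> B" for n using v(1)[of n] by auto
    ultimately show ?thesis using clo[OF B] closed_sequentially by blast
  qed
  then show ?thesis by blast
qed




lemma real_small_t:
  fixes L N :: real
  assumes "\<And>t. 0 < t \<Longrightarrow> t \<le> 1 \<Longrightarrow> t * L - t\<^sup>2 / 2 * N \<le> 0" "N \<ge> 0"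
  shows "L \<le> 0"
proof (rule ccontr)
  assume "\<not> L \<le> 0"
  then have L: "L > 0" by simp
  define t where "t = min 1 (L / (N + 1))"
  have t0: "t > 0" unfolding t_def using L assms(2) by simp
  have t1: "t \<le> 1" unfolding t_def by simp
  have tle: "t \<le> L / (N + 1)" unfolding t_def by simp
  have "t * L \<le> t\<^sup>2 / 2 * N" using assms(1)[OF t0 t1] by simp
  then have "t * L \<le> t * (t * N / 2)" by (simp add: power2_eq_square algebra_simps)
  then have "L \<le> t * N / 2" using t0 by simp
  also have "\<dots> \<le> L / (N + 1) * N / 2"
    by (intro divide_right_mono mult_right_mono tle assms(2)) simp
  also have "\<dots> < L" using L assms(2) by (simp add: field_simps, smt (verit) mult_nonneg_nonneg)
  finally show False by simp
qed

lemma norm_add_scale_sq: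
  fixes x d :: "'b::real_inner"
  shows "(norm (x + t *\<^sub>R d))\<^sup>2 = (norm x)\<^sup>2 + 2 * t * inner x d + t\<^sup>2 * (norm d)\<^sup>2"
  by (simp only: power2_norm_eq_inner) (simp add: inner_add_left inner_add_right inner_commute algebra_simps power2_eq_square)

definition liftp :: "'a::real_inner \<times> 'a \<Rightarrow> 'a \<times> 'a \<times> real" where
  "liftp p = (fst p, snd p, inner (fst p) (snd p))"

definition ballp :: "'a::real_inner \<times> 'a \<Rightarrow> ('a \<times> 'a) set" where
  "ballp p = cball (- snd p, - fst p) (norm (fst p + snd p))"

definition Pq :: "'a::real_inner \<times> 'a \<times> real \<Rightarrow> 'a \<times> 'a \<times> real \<Rightarrow> real" where
  "Pq q q' = snd (snd q) + snd (snd q') - inner (fst q) (fst (snd q')) - inner (fst q') (fst (snd q))"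

lemma Pq_sym: "Pq q q' = Pq q' q" unfolding Pq_def by simp

lemma Pq_convex: "convex {q. 0 \<le> Pq q q'}"
proof -
  have "{q. 0 \<le> Pq q q'} = {q. inner (- fst (snd q'), - fst q', 1::real) q \<ge> - snd (snd q')}"
    unfolding Pq_def by (auto simp: inner_prod_def inner_commute)
  then show ?thesis using convex_halfspace_ge by metis
qed

lemma finite_balls:
  fixes T :: "'a::real_inner \<Rightarrow> 'a set"
  assumes mono: "monotone_op T" and fin: "finite S" and sub: "S \<subseteq> {(y, v). v \<in> T y}"
  shows "\<exists>w. \<forall>p\<in>S. w \<in> ballp p"
proof (cases "S = {}")
  case True then show ?thesis by simp
next
  case False
  define Q where "Q = convex hull (liftp ` S)"
  have cQ: "compact Q" unfolding Q_def using fin by (intro finite_imp_compact_convex_hull) auto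
  have nQ: "Q \<noteq> {}" unfolding Q_def using False by simp
  define D where "D q = - snd (snd q) - ((norm (fst q))\<^sup>2 + (norm (fst (snd q)))\<^sup>2) / 2" for q :: "'a \<times> 'a \<times> real"
  have "continuous_on Q D" unfolding D_def by (intro continuous_intros) auto
  then obtain qs where qs: "qs \<in> Q" "\<And>q. q \<in> Q \<Longrightarrow> D q \<le> D qs"
    using continuous_attains_sup[OF cQ nQ] by metis
  have base: "0 \<le> Pq (liftp p1) (liftp p2)" if "p1 \<in> S" "p2 \<in> S" for p1 p2
  proof -
    obtain y1 v1 y2 v2 where e: "p1 = (y1, v1)" "p2 = (y2, v2)" by fastforce
    have "v1 \<in> T y1" "v2 \<in> T y2" using that sub e by auto
    then have "inner (y1 - y2) (v1 - v2) \<ge> 0" using mono unfolding monotone_op_def by blast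
    then show ?thesis unfolding Pq_def liftp_def e
      by (simp add: inner_diff_left inner_diff_right inner_commute algebra_simps)
  qed
  have step1: "0 \<le> Pq q q'" if "q \<in> Q" "q' \<in> liftp ` S" for q q'
  proof -
    have "liftp ` S \<subseteq> {q. 0 \<le> Pq q q'}" using base that(2) by auto
    then have "Q \<subseteq> {q. 0 \<le> Pq q q'}" unfolding Q_def using Pq_convex[of q'] by (intro hull_minimal) auto
    then show ?thesis using that(1) by auto
  qed
  have step2: "0 \<le> Pq q q'" if "q \<in> Q" "q' \<in> Q" for q q'
  proof -
    have "liftp ` S \<subseteq> {q'. 0 \<le> Pq q q'}" using step1[OF that(1)] by auto
    moreover have "convex {q'. 0 \<le> Pq q q'}" using Pq_convex[of q] by (simp add: Pq_sym)
    ultimately have "Q \<subseteq> {q'. 0 \<le> Pq q q'}" unfolding Q_def by (intro hull_minimal) auto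
    then show ?thesis using that(2) by auto
  qed
  have spos: "inner (fst qs) (fst (snd qs)) \<le> snd (snd qs)"
    using step2[OF qs(1) qs(1)] unfolding Pq_def by simp
  obtain Y V s where qse: "qs = (Y, V, s)" by (metis prod.exhaust)
  have Lneg: "- (inner y v - s) - inner Y (y - Y) - inner V (v - V) \<le> 0" if "(y, v) \<in> S" for y v
  proof -
    define l where "l = liftp (y, v)"
    have lQ: "l \<in> Q" unfolding Q_def l_def using that by (intro hull_inc) auto
    define d where "d = l - qs"
    define Lv where "Lv = - (inner y v - s) - inner Y (y - Y) - inner V (v - V)"
    define N where "N = (norm (y - Y))\<^sup>2 + (norm (v - V))\<^sup>2"
    have "t * Lv - t\<^sup>2 / 2 * N \<le> 0" if t: "0 < t" "t \<le> 1" for t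
    proof -
      have "qs + t *\<^sub>R d = (1 - t) *\<^sub>R qs + t *\<^sub>R l" unfolding d_def by (simp add: algebra_simps)
      also have "\<dots> \<in> Q" unfolding Q_def using qs(1) lQ t unfolding Q_def
        by (intro convexD) (auto simp: convex_convex_hull)
      finally have "D (qs + t *\<^sub>R d) \<le> D qs" using qs(2) by blast
      moreover have "D (qs + t *\<^sub>R d) = D qs + t * Lv - t\<^sup>2 / 2 * N"
      proof -
        have "qs + t *\<^sub>R d = (Y + t *\<^sub>R (y - Y), V + t *\<^sub>R (v - V), s + t * (inner y v - s))"
          by (simp add: d_def l_def liftp_def qse)
        then have "D (qs + t *\<^sub>R d) = - (s + t * (inner y v - s)) - ((norm (Y + t *\<^sub>R (y - Y)))\<^sup>2 + (norm (V + t *\<^sub>R (v - V)))\<^sup>2) / 2"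
          unfolding D_def by simp
        also have "\<dots> = D qs + t * Lv - t\<^sup>2 / 2 * N"
          unfolding norm_add_scale_sq D_def Lv_def N_def qse by (simp add: field_simps inner_diff_right)
        finally show ?thesis .
      qed
      ultimately show ?thesis by simp
    qed
    then have "Lv \<le> 0" using real_small_t[of Lv N] unfolding N_def by auto
    then show ?thesis unfolding Lv_def .
  qed
  have "(- V, - Y) \<in> ballp p" if "p \<in> S" for p
  proof -
    obtain y v where pe: "p = (y, v)" by fastforce
    have L: "- (inner y v - s) - inner Y (y - Y) - inner V (v - V) \<le> 0" using Lneg that pe by blast
    have sp: "inner Y V \<le> s" using spos qse by simp
    have e1: "(norm (V - v))\<^sup>2 = inner V V - 2 * inner V v + inner v v"
      by (simp add: power2_norm_eq_inner inner_diff_left inner_diff_right inner_commute)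
    have e2: "(norm (Y - y))\<^sup>2 = inner Y Y - 2 * inner Y y + inner y y"
      by (simp add: power2_norm_eq_inner inner_diff_left inner_diff_right inner_commute)
    have e3: "(norm (y + v))\<^sup>2 = inner y y + 2 * inner y v + inner v v"
      by (simp add: power2_norm_eq_inner inner_add_left inner_add_right inner_commute)
    have e4: "0 \<le> inner Y Y + 2 * inner Y V + inner V V"
      using zero_le_power2[of "norm (Y + V)"]
      by (simp add: power2_norm_eq_inner inner_add_left inner_add_right inner_commute)
    have e5: "- (inner y v - s) - inner Y (y - Y) - inner V (v - V)
       = - inner y v + s - inner Y y + inner Y Y - inner V v + inner V V"
      by (simp add: inner_diff_right)
    have "(norm (V - v))\<^sup>2 + (norm (Y - y))\<^sup>2 \<le> (norm (y + v))\<^sup>2"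
      using L sp e1 e2 e3 e4 e5 by linarith
    then have "sqrt ((norm (V - v))\<^sup>2 + (norm (Y - y))\<^sup>2) \<le> norm (y + v)"
      by (metis norm_ge_zero real_sqrt_le_mono real_sqrt_abs abs_of_nonneg)
    then show ?thesis unfolding ballp_def pe mem_cball dist_norm
      by (simp add: norm_Pair)
  qed
  then show ?thesis by blast
qed




lemma minty_core:
  fixes T :: "'a::{real_inner,complete_space} \<Rightarrow> 'a set"
  assumes mm: "maximal_monotone T"
  shows "\<exists>x. - x \<in> T x"
proof -
  define G where "G = {(y, v). v \<in> T y}"
  have mono: "monotone_op T" using mm unfolding maximal_monotone_def by blast
  have "\<Inter> (ballp ` G) \<noteq> {}"
  proof (rule fip_hilbert)
    fix B assume "B \<in> ballp ` G"
    then show "closed B" "convex B" "bounded B" unfolding ballp_def by auto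
  next
    fix F assume "finite F" "F \<subseteq> ballp ` G"
    then obtain S where S: "S \<subseteq> G" "finite S" "F = ballp ` S" by (meson finite_subset_image)
    then obtain w where "\<forall>p\<in>S. w \<in> ballp p" using finite_balls[OF mono, of S] unfolding G_def by blast
    then show "\<Inter> F \<noteq> {}" using S by auto
  qed
  then obtain x u where xu: "\<And>p. p \<in> G \<Longrightarrow> (x, u) \<in> ballp p" by fastforce
  have ineq: "(norm (x + v))\<^sup>2 + (norm (u + y))\<^sup>2 \<le> (norm (y + v))\<^sup>2" if "v \<in> T y" for y v
  proof -
    have "(x, u) \<in> ballp (y, v)" using xu that unfolding G_def by auto
    then have "sqrt ((norm (x + v))\<^sup>2 + (norm (u + y))\<^sup>2) \<le> norm (y + v)"
      unfolding ballp_def mem_cball dist_norm by (simp add: norm_Pair norm_minus_commute add.commute)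
    then show ?thesis
      by (metis norm_ge_zero real_sqrt_le_iff real_sqrt_abs abs_of_nonneg power2_abs)
  qed
  have "u \<in> T x"
    using mm unfolding maximal_monotone_def
  proof (intro conjunct2[OF mm[unfolded maximal_monotone_def], rule_format] allI impI)
    fix y v assume "v \<in> T y"
    from ineq[OF this] have h: "(norm (x + v))\<^sup>2 + (norm (u + y))\<^sup>2 \<le> (norm (y + v))\<^sup>2" .
    have e1: "(norm (x + v))\<^sup>2 = inner x x + 2 * inner x v + inner v v"
      by (simp add: power2_norm_eq_inner inner_add_left inner_add_right inner_commute)
    have e2: "(norm (u + y))\<^sup>2 = inner u u + 2 * inner y u + inner y y"
      by (simp add: power2_norm_eq_inner inner_add_left inner_add_right inner_commute)
    have e3: "(norm (y + v))\<^sup>2 = inner y y + 2 * inner y v + inner v v"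
      by (simp add: power2_norm_eq_inner inner_add_left inner_add_right inner_commute)
    have e4: "0 \<le> inner x x + 2 * inner x u + inner u u"
      using zero_le_power2[of "norm (x + u)"]
      by (simp add: power2_norm_eq_inner inner_add_left inner_add_right inner_commute)
    have e5: "inner (x - y) (u - v) = inner x u - inner x v - inner y u + inner y v"
      by (simp add: inner_diff_left inner_diff_right)
    show "0 \<le> inner (x - y) (u - v)" using h e1 e2 e3 e4 e5 by linarith
  qed
  then have "(norm (x + u))\<^sup>2 + (norm (u + x))\<^sup>2 \<le> (norm (x + u))\<^sup>2" using ineq by blast
  then have "x + u = 0" by (simp add: add.commute)
  then have "u = - x" by (simp add: eq_neg_iff_add_eq_0 add.commute)
  then show ?thesis using \<open>u \<in> T x\<close> by blast
qed




lemma shift_maxmono: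
  fixes T :: "'a::real_inner \<Rightarrow> 'a set"
  assumes mm: "maximal_monotone T" and r: "\<rho> > 0"
  shows "maximal_monotone (\<lambda>y. (\<lambda>u. \<rho> *\<^sub>R u) ` T (y + z))"
  unfolding maximal_monotone_def
proof (intro conjI allI impI)
  have mono: "monotone_op T" using mm unfolding maximal_monotone_def by blast
  show "monotone_op (\<lambda>y. (\<lambda>u. \<rho> *\<^sub>R u) ` T (y + z))"
    unfolding monotone_op_def
  proof (intro allI impI)
    fix x y u v assume "u \<in> (\<lambda>u. \<rho> *\<^sub>R u) ` T (x + z)" "v \<in> (\<lambda>u. \<rho> *\<^sub>R u) ` T (y + z)"
    then obtain u' v' where uv: "u' \<in> T (x + z)" "v' \<in> T (y + z)" "u = \<rho> *\<^sub>R u'" "v = \<rho> *\<^sub>R v'" by blast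
    have "0 \<le> inner ((x + z) - (y + z)) (u' - v')" using mono uv unfolding monotone_op_def by blast
    then have "0 \<le> \<rho> * inner (x - y) (u' - v')" using r by simp
    moreover have "inner (x - y) (u - v) = \<rho> * inner (x - y) (u' - v')"
      using uv by (simp add: scaleR_diff_right[symmetric])
    ultimately show "0 \<le> inner (x - y) (u - v)" by simp
  qed
next
  fix x u assume h: "\<forall>y v. v \<in> (\<lambda>u. \<rho> *\<^sub>R u) ` T (y + z) \<longrightarrow> 0 \<le> inner (x - y) (u - v)"
  have max: "\<And>x u. (\<And>y v. v \<in> T y \<Longrightarrow> 0 \<le> inner (x - y) (u - v)) \<Longrightarrow> u \<in> T x"
    using mm unfolding maximal_monotone_def by blast
  have "(1/\<rho>) *\<^sub>R u \<in> T (x + z)"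
  proof (rule max)
    fix y v assume v: "v \<in> T y"
    have "\<rho> *\<^sub>R v \<in> (\<lambda>u. \<rho> *\<^sub>R u) ` T ((y - z) + z)" using v by force
    then have "0 \<le> inner (x - (y - z)) (u - \<rho> *\<^sub>R v)" using h by blast
    moreover have "inner (x + z - y) ((1/\<rho>) *\<^sub>R u - v) = (1/\<rho>) * inner (x - (y - z)) (u - \<rho> *\<^sub>R v)"
      using r by (simp add: inner_diff_right algebra_simps)
    ultimately show "0 \<le> inner (x + z - y) ((1/\<rho>) *\<^sub>R u - v)" using r by simp
  qed
  then have "\<rho> *\<^sub>R ((1/\<rho>) *\<^sub>R u) \<in> (\<lambda>u. \<rho> *\<^sub>R u) ` T (x + z)" by blast
  then show "u \<in> (\<lambda>u. \<rho> *\<^sub>R u) ` T (x + z)" using r by simp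
qed

lemma resolvent_prop:
  fixes T :: "'a::{real_inner,complete_space} \<Rightarrow> 'a set"
  assumes mm: "maximal_monotone T" and r: "\<rho> > 0"
  shows "\<exists>u\<in>T (resolvent \<rho> T z). z = resolvent \<rho> T z + \<rho> *\<^sub>R u"
proof -
  have mono: "monotone_op T" using mm unfolding maximal_monotone_def by blast
  obtain y where "- y \<in> (\<lambda>u. \<rho> *\<^sub>R u) ` T (y + z)"
    using minty_core[OF shift_maxmono[OF mm r]] by blast
  then obtain u where u: "u \<in> T (y + z)" "- y = \<rho> *\<^sub>R u" by blast
  have ex: "\<exists>u\<in>T (y + z). z = (y + z) + \<rho> *\<^sub>R u" using u by (intro bexI[of _ u]) (auto simp: u(2)[symmetric])
  have uniq: "x = x'" if h1: "\<exists>u\<in>T x. z = x + \<rho> *\<^sub>R u" and h2: "\<exists>u\<in>T x'. z = x' + \<rho> *\<^sub>R u" for x x'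
  proof -
    obtain u where uu1: "u \<in> T x" "z = x + \<rho> *\<^sub>R u" using h1 by blast
    obtain u' where uu2: "u' \<in> T x'" "z = x' + \<rho> *\<^sub>R u'" using h2 by blast
    note uu = uu1 uu2
    have "0 \<le> inner (x - x') (u - u')" using mono uu unfolding monotone_op_def by blast
    moreover have "\<rho> *\<^sub>R (u - u') = - (x - x')" using uu by (simp add: algebra_simps)
    then have "\<rho> * inner (x - x') (u - u') = - inner (x - x') (x - x')"
      by (metis inner_minus_right inner_scaleR_right)
    ultimately have "inner (x - x') (x - x') \<le> 0" using r by (smt (verit) mult_pos_pos mult_nonneg_nonneg)
    then show ?thesis by (metis antisym inner_ge_zero inner_eq_zero_iff eq_iff_diff_eq_0)
  qed
  have "\<exists>!x. \<exists>u\<in>T x. z = x + \<rho> *\<^sub>R u" using ex uniq by blast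
  then show ?thesis unfolding resolvent_def by (rule theI')
qed

lemma real_two_ineq:
  fixes A B r1 r2 :: real
  assumes "0 \<le> A" "0 \<le> B" "0 < r1" "r1 < r2" "r2 * A\<^sup>2 + r1 * B\<^sup>2 \<le> (r1 + r2) * (A * B)"
  shows "A \<le> B \<and> r1 * B \<le> r2 * A"
proof -
  have key: "(A - B) * (r2 * A - r1 * B) \<le> 0" using assms(5) by (simp add: algebra_simps power2_eq_square)
  have 1: "A \<le> B"
  proof (rule ccontr)
    assume "\<not> A \<le> B"
    then have "A > B" by simp
    then have "r2 * A - r1 * B > 0"
      using assms by (smt (verit) mult_strict_right_mono mult_left_mono)
    then show False using key \<open>A > B\<close> by (smt (verit) mult_pos_pos)
  qed
  have 2: "r1 * B \<le> r2 * A"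
  proof (rule ccontr)
    assume "\<not> r1 * B \<le> r2 * A"
    then have n: "r2 * A - r1 * B < 0" by simp
    then have "A - B \<ge> 0" using key by (auto simp: mult_le_0_iff)
    then have "A = B" using 1 by simp
    then show False using n assms by (smt (verit) mult_right_mono)
  qed
  show ?thesis using 1 2 by simp
qed

lemma phi_mono:
  fixes T :: "'a::{real_inner,complete_space} \<Rightarrow> 'a set"
  assumes mm: "maximal_monotone T" and r: "0 < r1" "r1 < r2"
  shows "norm (resolvent r1 T z - z) \<le> norm (resolvent r2 T z - z)
     \<and> r1 * norm (resolvent r2 T z - z) \<le> r2 * norm (resolvent r1 T z - z)"
proof -
  have mono: "monotone_op T" using mm unfolding maximal_monotone_def by blast
  obtain u1 where u1: "u1 \<in> T (resolvent r1 T z)" "z = resolvent r1 T z + r1 *\<^sub>R u1"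
    using resolvent_prop[OF mm r(1)] by blast
  obtain u2 where u2: "u2 \<in> T (resolvent r2 T z)" "z = resolvent r2 T z + r2 *\<^sub>R u2"
    using resolvent_prop[OF mm] r by (meson less_trans)
  define d1 where "d1 = z - resolvent r1 T z"
  define d2 where "d2 = z - resolvent r2 T z"
  have "d1 = r1 *\<^sub>R u1" using u1(2) unfolding d1_def by (metis add_diff_cancel_left')
  then have hu1: "u1 = (1/r1) *\<^sub>R d1" using r by simp
  have "d2 = r2 *\<^sub>R u2" using u2(2) unfolding d2_def by (metis add_diff_cancel_left')
  then have hu2: "u2 = (1/r2) *\<^sub>R d2" using r by simp
  have "0 \<le> inner (resolvent r1 T z - resolvent r2 T z) (u1 - u2)"
    using mono u1(1) u2(1) unfolding monotone_op_def by blast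
  moreover have "resolvent r1 T z - resolvent r2 T z = d2 - d1" unfolding d1_def d2_def by simp
  ultimately have I0: "0 \<le> inner (d2 - d1) ((1/r1) *\<^sub>R d1 - (1/r2) *\<^sub>R d2)" using hu1 hu2 by simp
  then have I1: "0 \<le> r1 * r2 * inner (d2 - d1) ((1/r1) *\<^sub>R d1 - (1/r2) *\<^sub>R d2)" using r by simp
  have eqI: "r1 * r2 * inner (d2 - d1) ((1/r1) *\<^sub>R d1 - (1/r2) *\<^sub>R d2)
      = r2 * inner d1 d2 - r1 * inner d2 d2 - r2 * inner d1 d1 + r1 * inner d1 d2"
    using r by (simp add: inner_diff_left inner_diff_right inner_commute algebra_simps)
  have h: "0 \<le> r2 * inner d1 d2 - r1 * inner d2 d2 - r2 * inner d1 d1 + r1 * inner d1 d2"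
    using I1 eqI by linarith
  have cs: "inner d1 d2 \<le> norm d1 * norm d2" by (rule norm_cauchy_schwarz)
  have "r2 * (norm d1)\<^sup>2 + r1 * (norm d2)\<^sup>2 \<le> (r1 + r2) * (norm d1 * norm d2)"
  proof -
    have "r2 * (norm d1)\<^sup>2 + r1 * (norm d2)\<^sup>2 \<le> (r1 + r2) * inner d1 d2"
      using h by (simp add: power2_norm_eq_inner algebra_simps)
    also have "\<dots> \<le> (r1 + r2) * (norm d1 * norm d2)" using cs r by (intro mult_left_mono) auto
    finally show ?thesis .
  qed
  from real_two_ineq[OF norm_ge_zero norm_ge_zero r this]
  show ?thesis unfolding d1_def d2_def by (simp add: norm_minus_commute)
qed

lemma phi_pos:
  fixes T :: "'a::{real_inner,complete_space} \<Rightarrow> 'a set"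
  assumes mm: "maximal_monotone T" and r: "0 < \<rho>" and z: "0 \<notin> T z"
  shows "norm (resolvent \<rho> T z - z) > 0"
proof -
  obtain u where u: "u \<in> T (resolvent \<rho> T z)" "z = resolvent \<rho> T z + \<rho> *\<^sub>R u"
    using resolvent_prop[OF mm r] by blast
  show ?thesis
  proof (rule ccontr)
    assume "\<not> ?thesis"
    then have e: "resolvent \<rho> T z = z" by simp
    then have "\<rho> *\<^sub>R u = 0" using u(2) by (metis add_cancel_left_right)
    then have "u = 0" using r by simp
    then show False using u(1) e z by simp
  qed
qed




lemma quart_root: "(q::real) > 0 \<Longrightarrow> (q ^ 4) powr (1/4) = q"
proof -
  assume q: "q > 0"
  have "q ^ 4 = q powr (real 4)" using powr_realpow[OF q, of 4] by simp
  then have "(q ^ 4) powr (1/4) = q powr (real 4 * (1/4))" by (simp add: powr_powr)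
  also have "\<dots> = q" using q by simp
  finally show ?thesis .
qed

lemma anti_quart:
  fixes a b x y px py :: real
  assumes "a \<ge> 0" "b \<ge> 0" "0 < x" "x \<le> y" "x * py \<le> y * px" "0 \<le> px" "0 \<le> py"
  shows "(a * y\<^sup>2 + b * y + (y * py)\<^sup>2) * x ^ 4 \<le> (a * x\<^sup>2 + b * x + (x * px)\<^sup>2) * y ^ 4"
proof -
  have xy2: "x\<^sup>2 \<le> y\<^sup>2" using assms by (simp add: power_mono)
  have t1: "a * y\<^sup>2 * x ^ 4 \<le> a * x\<^sup>2 * y ^ 4"
  proof -
    have "x\<^sup>2 * y\<^sup>2 * x\<^sup>2 \<le> x\<^sup>2 * y\<^sup>2 * y\<^sup>2" using xy2 by (intro mult_left_mono) auto
    then have "a * (x\<^sup>2 * y\<^sup>2 * x\<^sup>2) \<le> a * (x\<^sup>2 * y\<^sup>2 * y\<^sup>2)" using assms(1) by (rule mult_left_mono)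
    then show ?thesis by (simp add: power2_eq_square power4_eq_xxxx algebra_simps)
  qed
  have t2: "b * y * x ^ 4 \<le> b * x * y ^ 4"
  proof -
    have "x ^ 3 \<le> y ^ 3" using assms by (simp add: power_mono)
    then have "x * y * x ^ 3 \<le> x * y * y ^ 3" using assms by (intro mult_left_mono) auto
    then have "b * (x * y * x ^ 3) \<le> b * (x * y * y ^ 3)" using assms(2) by (rule mult_left_mono)
    then show ?thesis by (simp add: power3_eq_cube power4_eq_xxxx algebra_simps)
  qed
  have t3: "(y * py)\<^sup>2 * x ^ 4 \<le> (x * px)\<^sup>2 * y ^ 4"
  proof -
    have "(x * py)\<^sup>2 \<le> (y * px)\<^sup>2" using assms by (intro power_mono) auto
    then have "(x * py)\<^sup>2 * (x\<^sup>2 * y\<^sup>2) \<le> (y * px)\<^sup>2 * (x\<^sup>2 * y\<^sup>2)" by (intro mult_right_mono) auto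
    then show ?thesis by (simp add: power2_eq_square power4_eq_xxxx algebra_simps)
  qed
  show ?thesis using t1 t2 t3 by (simp add: algebra_simps)
qed

theorem lemma5p6:
  fixes T :: "'a::{real_inner, complete_space} \<Rightarrow> 'a set"
    and a b :: real and z :: 'a
  assumes "maximal_monotone T"
    and "a \<ge> 0" and "b \<ge> 0"
    and "0 \<notin> T z"
  shows "(\<forall>\<rho>>0. psi a b T \<rho> z > 0)
    \<and> strict_mono_on {0<..} (\<lambda>\<rho>. psi a b T \<rho> z)
    \<and> continuous_on {0<..} (\<lambda>\<rho>. psi a b T \<rho> z)
    \<and> ((\<lambda>\<rho>. psi a b T \<rho> z) \<longlongrightarrow> 0) (at_right 0)
    \<and> filterlim (\<lambda>\<rho>. psi a b T \<rho> z) at_top at_top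
    \<and> (\<forall>\<theta>m \<theta>p. 0 < \<theta>m \<and> \<theta>m < \<theta>p \<longrightarrow>
         (\<exists>\<rho>m \<rho>p. 0 < \<rho>m \<and> \<rho>m \<le> \<rho>p
            \<and> {\<rho>. 0 < \<rho> \<and> \<theta>m \<le> psi a b T \<rho> z \<and> psi a b T \<rho> z \<le> \<theta>p} = {\<rho>m..\<rho>p}
            \<and> psi a b T \<rho>m z = \<theta>m \<and> psi a b T \<rho>p z = \<theta>p
            \<and> \<rho>p / \<rho>m \<ge> (\<theta>p / \<theta>m) powr (1/4)))"
proof -
  note mm = assms(1) and a0 = assms(2) and b0 = assms(3) and z0 = assms(4)
  define \<phi> where "\<phi> \<rho> = norm (resolvent \<rho> T z - z)" for \<rho>
  define f where "f \<rho> = psi a b T \<rho> z" for \<rho>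
  have fdef: "f \<rho> = a * \<rho>\<^sup>2 + b * \<rho> + (\<rho> * \<phi> \<rho>)\<^sup>2" for \<rho>
    unfolding f_def \<phi>_def psi_def by simp
  have fext: "(\<lambda>\<rho>. psi a b T \<rho> z) = f" unfolding f_def by simp
  have ppos: "\<phi> \<rho> > 0" if "\<rho> > 0" for \<rho> unfolding \<phi>_def using phi_pos[OF mm that z0] .
  have pnn: "\<phi> \<rho> \<ge> 0" for \<rho> unfolding \<phi>_def by simp
  have m1: "\<phi> r1 \<le> \<phi> r2" if "0 < r1" "r1 \<le> r2" for r1 r2
    using phi_mono[OF mm, of r1 r2 z] that unfolding \<phi>_def by (cases "r1 = r2") auto
  have m2: "r1 * \<phi> r2 \<le> r2 * \<phi> r1" if "0 < r1" "r1 \<le> r2" for r1 r2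
    using phi_mono[OF mm, of r1 r2 z] that unfolding \<phi>_def by (cases "r1 = r2") auto
  have fpos: "f \<rho> > 0" if "\<rho> > 0" for \<rho>
  proof -
    have "\<rho> * \<phi> \<rho> > 0" using that ppos[OF that] by simp
    then have "(\<rho> * \<phi> \<rho>)\<^sup>2 > 0" by (rule zero_less_power)
    moreover have "a * \<rho>\<^sup>2 \<ge> 0" "b * \<rho> \<ge> 0" using a0 b0 that by simp_all
    ultimately show ?thesis unfolding fdef by linarith
  qed
  have fstrict: "f x < f y" if "0 < x" "x < y" for x y
  proof -
    have "x * \<phi> x < y * \<phi> x" using that ppos[OF that(1)] by simp
    also have "\<dots> \<le> y * \<phi> y" using m1[of x y] that by (intro mult_left_mono) auto
    finally have "(x * \<phi> x)\<^sup>2 < (y * \<phi> y)\<^sup>2"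
      using that ppos[OF that(1)] by (intro power_strict_mono) auto
    moreover have "a * x\<^sup>2 \<le> a * y\<^sup>2" using a0 that by (intro mult_left_mono power_mono) auto
    moreover have "b * x \<le> b * y" using b0 that by (intro mult_left_mono) auto
    ultimately show ?thesis unfolding fdef by linarith
  qed
  have smono: "strict_mono_on {0<..} f"
    by (rule strict_mono_onI) (auto intro: fstrict)
  have fle: "f x \<le> f y" if "0 < x" "x \<le> y" for x y
    using fstrict[of x y] that by (cases "x = y") auto
  have cphi: "continuous_on {0<..} \<phi>"
  proof (rule continuous_at_imp_continuous_on, intro ballI)
    fix r0 :: real assume "r0 \<in> {0<..}"
    then have r0: "r0 > 0" by simp
    define c where "c = \<phi> r0 / r0"
    have c0: "c \<ge> 0" unfolding c_def using pnn r0 by simp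
    have pr0: "\<phi> r0 = r0 * c" unfolding c_def using r0 by simp
    have bound: "\<bar>\<phi> r - \<phi> r0\<bar> \<le> \<bar>r - r0\<bar> * c" if r: "r > 0" for r
    proof (cases "r \<le> r0")
      case True
      have "r * \<phi> r0 \<le> r0 * \<phi> r" using m2[OF r True] .
      then have "r * c * r0 \<le> \<phi> r * r0" using pr0 by (simp add: algebra_simps)
      then have "r * c \<le> \<phi> r" using r0 by simp
      moreover have "\<phi> r \<le> \<phi> r0" using m1[OF r True] .
      ultimately show ?thesis using True pr0 by (simp add: abs_if algebra_simps)
    next
      case False
      then have F: "r0 \<le> r" by simp
      have "r0 * \<phi> r \<le> r * \<phi> r0" using m2[OF r0 F] .
      then have "r0 * \<phi> r \<le> r0 * (r * c)" using pr0 by (simp add: algebra_simps)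
      then have "\<phi> r \<le> r * c" using r0 by simp
      moreover have "\<phi> r0 \<le> \<phi> r" using m1[OF r0 F] .
      ultimately show ?thesis using F pr0 by (simp add: abs_if algebra_simps)
    qed
    show "isCont \<phi> r0"
      unfolding continuous_at_eps_delta
    proof (intro allI impI)
      fix e :: real assume e: "e > 0"
      define d where "d = min r0 (e / (c + 1))"
      have d0: "d > 0" unfolding d_def using r0 e c0 by simp
      show "\<exists>d>0. \<forall>x'. dist x' r0 < d \<longrightarrow> dist (\<phi> x') (\<phi> r0) < e"
      proof (intro exI[of _ d] conjI allI impI d0)
        fix x' assume "dist x' r0 < d"
        then have h: "\<bar>x' - r0\<bar> < d" by (simp add: dist_real_def)
        then have "x' > 0" unfolding d_def by auto
        then have "\<bar>\<phi> x' - \<phi> r0\<bar> \<le> \<bar>x' - r0\<bar> * c" by (rule bound)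
        also have "\<dots> \<le> \<bar>x' - r0\<bar> * (c + 1)" by (simp add: mult_left_mono)
        also have "\<dots> < (e / (c + 1)) * (c + 1)"
          using h c0 unfolding d_def by (intro mult_strict_right_mono) auto
        also have "\<dots> = e" using c0 by simp
        finally show "dist (\<phi> x') (\<phi> r0) < e" by (simp add: dist_real_def)
      qed
    qed
  qed
  have fcont: "continuous_on {0<..} f"
  proof -
    have "continuous_on {0<..} (\<lambda>\<rho>. a * \<rho>\<^sup>2 + b * \<rho> + (\<rho> * \<phi> \<rho>)\<^sup>2)"
      by (intro continuous_intros cphi)
    then show ?thesis unfolding fdef[abs_def] .
  qed
  have flim0: "(f \<longlongrightarrow> 0) (at_right 0)"
  proof (rule tendsto_sandwich[of "\<lambda>_. 0" f _ "\<lambda>\<rho>. a * \<rho>\<^sup>2 + b * \<rho> + (\<rho> * \<phi> 1)\<^sup>2"])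
    have ev: "eventually (\<lambda>\<rho>. \<rho> \<in> {0<..<1}) (at_right (0::real))" by (rule eventually_at_right_real) simp
    show "eventually (\<lambda>\<rho>. 0 \<le> f \<rho>) (at_right 0)"
      using ev by eventually_elim (use fpos in \<open>auto intro: less_imp_le\<close>)
    show "eventually (\<lambda>\<rho>. f \<rho> \<le> a * \<rho>\<^sup>2 + b * \<rho> + (\<rho> * \<phi> 1)\<^sup>2) (at_right 0)"
      using ev
    proof eventually_elim
      case (elim \<rho>)
      then have "\<rho> * \<phi> \<rho> \<le> \<rho> * \<phi> 1" using m1[of \<rho> 1] by (intro mult_left_mono) auto
      then have "(\<rho> * \<phi> \<rho>)\<^sup>2 \<le> (\<rho> * \<phi> 1)\<^sup>2" using elim pnn[of \<rho>] by (intro power_mono) auto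
      then show ?case unfolding fdef by simp
    qed
    show "((\<lambda>_. 0) \<longlongrightarrow> (0::real)) (at_right 0)" by simp
    have "((\<lambda>\<rho>. a * \<rho>\<^sup>2 + b * \<rho> + (\<rho> * \<phi> 1)\<^sup>2) \<longlongrightarrow> a * 0\<^sup>2 + b * 0 + (0 * \<phi> 1)\<^sup>2) (at_right (0::real))"
      by (intro tendsto_intros)
    then show "((\<lambda>\<rho>. a * \<rho>\<^sup>2 + b * \<rho> + (\<rho> * \<phi> 1)\<^sup>2) \<longlongrightarrow> 0) (at_right 0)" by simp
  qed
  have flimtop: "filterlim f at_top at_top"
  proof (rule filterlim_at_top_mono)
    have p1: "(\<phi> 1)\<^sup>2 > 0" using ppos[of 1] by simp
    show "filterlim (\<lambda>\<rho>. (\<phi> 1)\<^sup>2 * \<rho>) at_top at_top"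
      by (rule filterlim_tendsto_pos_mult_at_top[OF tendsto_const p1 filterlim_ident])
    show "eventually (\<lambda>\<rho>. (\<phi> 1)\<^sup>2 * \<rho> \<le> f \<rho>) at_top"
      using eventually_ge_at_top[of "1::real"]
    proof eventually_elim
      case (elim \<rho>)
      have "\<phi> 1 \<le> \<phi> \<rho>" using m1[of 1 \<rho>] elim by simp
      then have "\<rho> * \<phi> 1 \<le> \<rho> * \<phi> \<rho>" using elim by (intro mult_left_mono) auto
      then have "(\<rho> * \<phi> 1)\<^sup>2 \<le> (\<rho> * \<phi> \<rho>)\<^sup>2" using elim pnn[of 1] by (intro power_mono) auto
      moreover have "(\<phi> 1)\<^sup>2 * \<rho> \<le> (\<phi> 1)\<^sup>2 * \<rho>\<^sup>2"
        using elim by (intro mult_left_mono) (auto simp: power2_eq_square)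
      moreover have "a * \<rho>\<^sup>2 \<ge> 0" "b * \<rho> \<ge> 0" using a0 b0 elim by simp_all
      moreover have "(\<rho> * \<phi> 1)\<^sup>2 = (\<phi> 1)\<^sup>2 * \<rho>\<^sup>2" by (simp add: power_mult_distrib)
      ultimately show ?case unfolding fdef by linarith
    qed
  qed
  have levels: "\<exists>\<rho>m \<rho>p. 0 < \<rho>m \<and> \<rho>m \<le> \<rho>p
            \<and> {\<rho>. 0 < \<rho> \<and> \<theta>m \<le> f \<rho> \<and> f \<rho> \<le> \<theta>p} = {\<rho>m..\<rho>p}
            \<and> f \<rho>m = \<theta>m \<and> f \<rho>p = \<theta>p
            \<and> \<rho>p / \<rho>m \<ge> (\<theta>p / \<theta>m) powr (1/4)" if th: "0 < \<theta>m" "\<theta>m < \<theta>p" for \<theta>m \<theta>p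
  proof -
    have "eventually (\<lambda>\<rho>. f \<rho> < \<theta>m) (at_right 0)" using order_tendstoD(2)[OF flim0 th(1)] .
    moreover have "eventually (\<lambda>\<rho>. \<rho> \<in> {0<..<1}) (at_right (0::real))" by (rule eventually_at_right_real) simp
    ultimately have "eventually (\<lambda>\<rho>. f \<rho> < \<theta>m \<and> \<rho> \<in> {0<..<1}) (at_right (0::real))"
      by (rule eventually_conj)
    then obtain r1 where r1: "f r1 < \<theta>m" "0 < r1"
      using eventually_happens[of _ "at_right (0::real)"] trivial_limit_at_right_real[of 0] by fastforce
    obtain N where N: "\<And>x. x \<ge> N \<Longrightarrow> \<theta>p + 1 \<le> f x"
      using flimtop unfolding filterlim_at_top eventually_at_top_linorder by blast
    define r2 where "r2 = max N r1"
    have r2: "r1 \<le> r2" "\<theta>p + 1 \<le> f r2" unfolding r2_def using N by auto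
    have cc: "continuous_on {r1..r2} f" using r1(2) by (intro continuous_on_subset[OF fcont]) auto
    have "f r1 \<le> \<theta>m" "\<theta>m \<le> f r2" "f r1 \<le> \<theta>p" "\<theta>p \<le> f r2" using r1 r2 th by linarith+
    then have "\<exists>x\<ge>r1. x \<le> r2 \<and> f x = \<theta>m" "\<exists>x\<ge>r1. x \<le> r2 \<and> f x = \<theta>p"
      using IVT'[OF _ _ r2(1) cc] by blast+
    then obtain \<rho>m \<rho>p where pm: "r1 \<le> \<rho>m" "\<rho>m \<le> r2" "f \<rho>m = \<theta>m"
      and pp: "r1 \<le> \<rho>p" "\<rho>p \<le> r2" "f \<rho>p = \<theta>p" by blast
    have pm0: "\<rho>m > 0" using pm r1 by simp
    have pp0: "\<rho>p > 0" using pp r1 by simp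
    have ord: "\<rho>m \<le> \<rho>p"
    proof (rule ccontr)
      assume "\<not> \<rho>m \<le> \<rho>p"
      then have "f \<rho>p < f \<rho>m" using fstrict pp0 by simp
      then show False using pm pp th by simp
    qed
    have set: "{\<rho>. 0 < \<rho> \<and> \<theta>m \<le> f \<rho> \<and> f \<rho> \<le> \<theta>p} = {\<rho>m..\<rho>p}"
    proof (intro set_eqI iffI)
      fix \<rho> assume "\<rho> \<in> {\<rho>. 0 < \<rho> \<and> \<theta>m \<le> f \<rho> \<and> f \<rho> \<le> \<theta>p}"
      then have h: "0 < \<rho>" "\<theta>m \<le> f \<rho>" "f \<rho> \<le> \<theta>p" by auto
      have "\<rho>m \<le> \<rho>" using fstrict[OF h(1), of \<rho>m] h pm by force
      moreover have "\<rho> \<le> \<rho>p" using fstrict[OF pp0, of \<rho>] h pp by force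
      ultimately show "\<rho> \<in> {\<rho>m..\<rho>p}" by simp
    next
      fix \<rho> assume "\<rho> \<in> {\<rho>m..\<rho>p}"
      then have h: "\<rho>m \<le> \<rho>" "\<rho> \<le> \<rho>p" by auto
      then have "0 < \<rho>" using pm0 by simp
      moreover have "\<theta>m \<le> f \<rho>" using fle[OF pm0 h(1)] pm by simp
      moreover have "f \<rho> \<le> \<theta>p" using fle[OF \<open>0 < \<rho>\<close> h(2)] pp by simp
      ultimately show "\<rho> \<in> {\<rho>. 0 < \<rho> \<and> \<theta>m \<le> f \<rho> \<and> f \<rho> \<le> \<theta>p}" by simp
    qed
    have aq: "f \<rho>p * \<rho>m ^ 4 \<le> f \<rho>m * \<rho>p ^ 4"
      unfolding fdef using anti_quart[OF a0 b0 pm0 ord m2[OF pm0 ord] pnn pnn] .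
    then have "\<theta>p * \<rho>m ^ 4 \<le> \<theta>m * \<rho>p ^ 4" using pm pp by simp
    then have "\<theta>p / \<theta>m \<le> \<rho>p ^ 4 / \<rho>m ^ 4" using th pm0 by (simp add: field_simps)
    then have "\<theta>p / \<theta>m \<le> (\<rho>p / \<rho>m) ^ 4" by (simp add: power_divide)
    then have "(\<theta>p / \<theta>m) powr (1/4) \<le> ((\<rho>p / \<rho>m) ^ 4) powr (1/4)"
      using th by (intro powr_mono2) auto
    also have "\<dots> = \<rho>p / \<rho>m" using pm0 pp0 by (intro quart_root) simp
    finally show ?thesis using pm0 ord set pm pp by blast
  qed
  show ?thesis unfolding f_def[symmetric]
  proof (intro conjI allI impI)
    fix \<rho> :: real assume "\<rho> > 0" then show "f \<rho> > 0" by (rule fpos)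
  next
    show "strict_mono_on {0<..} f" by (rule smono)
  next
    show "continuous_on {0<..} f" by (rule fcont)
  next
    show "(f \<longlongrightarrow> 0) (at_right 0)" by (rule flim0)
  next
    show "filterlim f at_top at_top" by (rule flimtop)
  next
    fix \<theta>m \<theta>p :: real assume "0 < \<theta>m \<and> \<theta>m < \<theta>p"
    then show "\<exists>\<rho>m \<rho>p. 0 < \<rho>m \<and> \<rho>m \<le> \<rho>p
            \<and> {\<rho>. 0 < \<rho> \<and> \<theta>m \<le> f \<rho> \<and> f \<rho> \<le> \<theta>p} = {\<rho>m..\<rho>p}
            \<and> f \<rho>m = \<theta>m \<and> f \<rho>p = \<theta>p
            \<and> \<rho>p / \<rho>m \<ge> (\<theta>p / \<theta>m) powr (1/4)" using levels by blast
  qed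
qed


end
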